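(* Let $b\ge0$, $c\ge0$, $1\le a\le c+1$, and $f\in\mathbb{F}_q[x_1,\dots,x_c]$. Then $\delta_{a;b}(f)$ is a polynomial if and only if for all $c_1,\dots,c_{a-1}\in\mathbb{F}_q$ the following identity of polynomials holds, with $y=\sum_{j=1}^{a-1}c_jx_j$: $$\sum_{i=1}^{a-1}c_i\,x_i^{q^b}\,f(x_1,\dots,x_{i-1},x_{i+1},\dots,x_{a-1},y,x_{a+1},\dots,x_{c+1})=\Big(\sum_{j=1}^{a-1}c_jx_j^{q^b}\Big)f(x_1,\dots,x_{a-1},x_{a+1},\dots,x_{c+1}).$$
   Context: $q$ is a power of a prime. Delta operators: for integers $b\ge0$, $c\ge0$, $1\le a\le c+1$, $\delta_{a;b}:\mathbb{F}_q(x_1,\dots,x_c)\to\mathbb{F}_q(x_1,\dots,x_{c+1})$ sends $f$ to $N/L(x_1,\dots,x_a)$, where $N$ is the $a\times a$ determinant whose $t$-th row is $(x_1^{q^{t-1}},\dots,x_a^{q^{t-1}})$ for $t=1,\dots,a-1$ and whose last row is $(x_1^{q^b}f(\hat x_1),\dots,x_a^{q^b}f(\hat x_a))$, with $f(\hat x_i)=f(x_1,\dots,x_{i-1},x_{i+1},\dots,x_{c+1})$, and $L(x_1,\dots,x_a)=\det(x_j^{q^{t-1}})_{1\le t,j\le a}$. *)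

theory Defs
  imports "HOL-Library.Poly_Mapping" "Jordan_Normal_Form.Determinant"
begin

text \<open>Multivariate polynomials over 'a in the variables x_0, x_1, x_2, ...
  (we only use x_1, x_2, ...): monomials are finitely supported exponent
  vectors nat \<Rightarrow>0 nat, polynomials are finitely supported coefficient maps.\<close>
type_synonym 'a mpoly = "(nat \<Rightarrow>\<^sub>0 nat) \<Rightarrow>\<^sub>0 'a"

definition Var :: "nat \<Rightarrow> ('a::comm_ring_1) mpoly" where
  "Var i = Poly_Mapping.single (Poly_Mapping.single i 1) 1"

definition Const :: "('a::comm_ring_1) \<Rightarrow> 'a mpoly" where
  "Const c = Poly_Mapping.single 0 c"

definition mvars :: "('a::zero) mpoly \<Rightarrow> nat set" where
  "mvars p = \<Union> (Poly_Mapping.keys ` Poly_Mapping.keys p)"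

definition subst :: "(nat \<Rightarrow> ('a::comm_ring_1) mpoly) \<Rightarrow> 'a mpoly \<Rightarrow> 'a mpoly" where
  "subst s p = (\<Sum>m\<in>Poly_Mapping.keys p.
      Const (Poly_Mapping.lookup p m) *
      (\<Prod>v\<in>Poly_Mapping.keys m. s v ^ Poly_Mapping.lookup m v))"

text \<open>f(\<hat>x_i) = f(x_1,...,x_{i-1},x_{i+1},...,x_{c+1}) for f in the variables x_1..x_c.\<close>
definition omit :: "nat \<Rightarrow> ('a::comm_ring_1) mpoly \<Rightarrow> 'a mpoly" where
  "omit i f = subst (\<lambda>k. if k < i then Var k else Var (k + 1)) f"

text \<open>Moore determinant L(x_1,...,x_a) = det (x_j^(q^(t-1)))_{1\<le>t,j\<le>a}.\<close>
definition mooreL :: "nat \<Rightarrow> nat \<Rightarrow> ('a::comm_ring_1) mpoly" where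
  "mooreL q a = det (mat a a (\<lambda>(t, j). Var (j + 1) ^ (q ^ t)))"

text \<open>Numerator N of delta_{a;b}(f): rows t = 1..a-1 are (x_j^(q^(t-1)))_j,
  last row is (x_j^(q^b) f(\<hat>x_j))_j.\<close>
definition deltaN :: "nat \<Rightarrow> nat \<Rightarrow> nat \<Rightarrow> ('a::comm_ring_1) mpoly \<Rightarrow> 'a mpoly" where
  "deltaN q a b f = det (mat a a (\<lambda>(t, j).
      if t + 1 < a then Var (j + 1) ^ (q ^ t)
      else Var (j + 1) ^ (q ^ b) * omit (j + 1) f))"

text \<open>delta_{a;b}(f) = N / L is a polynomial, i.e. L divides N in the
  polynomial ring (L is a nonzero polynomial).\<close>
definition delta_is_poly :: "nat \<Rightarrow> nat \<Rightarrow> nat \<Rightarrow> ('a::comm_ring_1) mpoly \<Rightarrow> bool" where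
  "delta_is_poly q a b f \<longleftrightarrow> mooreL q a dvd deltaN q a b f"

end

theory Submission
  imports Defs
begin

lemma pm_repr:
  fixes p :: "'k \<Rightarrow>\<^sub>0 'b::comm_monoid_add"
  assumes "finite S" "Poly_Mapping.keys p \<subseteq> S"
  shows "p = (\<Sum>m\<in>S. Poly_Mapping.single m (Poly_Mapping.lookup p m))"
proof (rule poly_mapping_eqI)
  fix k
  have "Poly_Mapping.lookup (\<Sum>m\<in>S. Poly_Mapping.single m (Poly_Mapping.lookup p m)) k
      = (\<Sum>m\<in>S. if k = m then Poly_Mapping.lookup p m else 0)"
    unfolding lookup_sum lookup_single by (intro sum.cong) (auto simp: when_def)
  also have "\<dots> = Poly_Mapping.lookup p k"
    using assms by (auto simp: sum.delta in_keys_iff)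
  finally show "Poly_Mapping.lookup p k = Poly_Mapping.lookup (\<Sum>m\<in>S. Poly_Mapping.single m (Poly_Mapping.lookup p m)) k" by simp
qed

definition mon :: "(nat \<Rightarrow> 'b::comm_ring_1) \<Rightarrow> (nat \<Rightarrow>\<^sub>0 nat) \<Rightarrow> 'b" where
  "mon s m = (\<Prod>v\<in>Poly_Mapping.keys m. s v ^ Poly_Mapping.lookup m v)"

lemma mon_superset:
  assumes "finite S" "Poly_Mapping.keys m \<subseteq> S"
  shows "mon s m = (\<Prod>v\<in>S. s v ^ Poly_Mapping.lookup m v)"
  unfolding mon_def using assms
  by (intro prod.mono_neutral_left) (auto simp: in_keys_iff)

lemma mon_add: "mon s (m1 + m2) = mon s m1 * mon s m2"
proof -
  let ?S = "Poly_Mapping.keys m1 \<union> Poly_Mapping.keys m2"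
  have f: "finite ?S" by simp
  have "mon s (m1 + m2) = (\<Prod>v\<in>?S. s v ^ Poly_Mapping.lookup (m1 + m2) v)"
    using keys_add[of m1 m2] by (intro mon_superset) auto
  also have "\<dots> = (\<Prod>v\<in>?S. s v ^ Poly_Mapping.lookup m1 v) * (\<Prod>v\<in>?S. s v ^ Poly_Mapping.lookup m2 v)"
    by (simp add: lookup_add power_add prod.distrib)
  also have "\<dots> = mon s m1 * mon s m2"
    by (subst (1 2) mon_superset[where S = ?S]) auto
  finally show ?thesis .
qed

lemma mon_zero [simp]: "mon s 0 = 1"
  by (simp add: mon_def)

lemma Const_0 [simp]: "Const 0 = 0"
  by (simp add: Const_def)
lemma Const_1 [simp]: "Const 1 = 1"
  by (simp add: Const_def)
lemma Const_add: "Const (x + y) = Const x + Const y"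
  by (simp add: Const_def single_add)
lemma Const_mult: "Const (x * y) = Const x * Const y"
  by (simp add: Const_def mult_single)
lemma Const_diff: "Const (x - y) = Const x - Const y"
  by (simp add: Const_def single_diff)
lemma Const_uminus: "Const (- x) = - Const x"
  by (simp add: Const_def single_uminus)
lemma Const_power: "Const (x ^ n) = Const x ^ n"
  by (induction n) (simp_all add: Const_mult)
lemma Const_inj: "Const x = Const y \<longleftrightarrow> x = y"
  by (metis Const_def lookup_single_eq)

lemma subst_superset:
  assumes "finite S" "Poly_Mapping.keys p \<subseteq> S"
  shows "subst s p = (\<Sum>m\<in>S. Const (Poly_Mapping.lookup p m) * mon s m)"
  unfolding subst_def mon_def[symmetric] using assms
  by (intro sum.mono_neutral_left) (auto simp: in_keys_iff)

lemma subst_add: "subst s (p + q) = subst s p + subst s q"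
proof -
  let ?S = "Poly_Mapping.keys p \<union> Poly_Mapping.keys q"
  have "subst s (p + q) = (\<Sum>m\<in>?S. Const (Poly_Mapping.lookup (p + q) m) * mon s m)"
    using keys_add[of p q] by (intro subst_superset) auto
  also have "\<dots> = (\<Sum>m\<in>?S. Const (Poly_Mapping.lookup p m) * mon s m) + (\<Sum>m\<in>?S. Const (Poly_Mapping.lookup q m) * mon s m)"
    by (simp add: lookup_add Const_add distrib_right sum.distrib)
  also have "\<dots> = subst s p + subst s q"
    by (subst (1 2) subst_superset[where S = ?S]) auto
  finally show ?thesis .
qed

lemma subst_zero [simp]: "subst s 0 = 0"
  by (simp add: subst_def)

lemma subst_single: "subst s (Poly_Mapping.single m c) = Const c * mon s m"
  by (cases "c = 0") (simp_all add: subst_def mon_def)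

lemma subst_sum: "subst s (sum f A) = (\<Sum>x\<in>A. subst s (f x))"
  by (induction A rule: infinite_finite_induct) (simp_all add: subst_add)

lemma mult_repr:
  fixes p q :: "'a::comm_ring_1 mpoly"
  shows "p * q = (\<Sum>m1\<in>Poly_Mapping.keys p. \<Sum>m2\<in>Poly_Mapping.keys q.
            Poly_Mapping.single (m1 + m2) (Poly_Mapping.lookup p m1 * Poly_Mapping.lookup q m2))"
proof -
  have "p * q = (\<Sum>m1\<in>Poly_Mapping.keys p. Poly_Mapping.single m1 (Poly_Mapping.lookup p m1)) *
                (\<Sum>m2\<in>Poly_Mapping.keys q. Poly_Mapping.single m2 (Poly_Mapping.lookup q m2))"
    by (subst (1) pm_repr[of "Poly_Mapping.keys p" p], simp, simp,
        subst (1) pm_repr[of "Poly_Mapping.keys q" q], simp, simp) (rule refl)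
  also have "\<dots> = (\<Sum>m1\<in>Poly_Mapping.keys p. \<Sum>m2\<in>Poly_Mapping.keys q.
            Poly_Mapping.single m1 (Poly_Mapping.lookup p m1) * Poly_Mapping.single m2 (Poly_Mapping.lookup q m2))"
    by (simp add: sum_product)
  finally show ?thesis by (simp add: mult_single)
qed

lemma subst_mult: "subst s (p * q) = subst s p * subst s q"
proof -
  have "subst s (p * q) = (\<Sum>m1\<in>Poly_Mapping.keys p. \<Sum>m2\<in>Poly_Mapping.keys q.
      Const (Poly_Mapping.lookup p m1) * mon s m1 * (Const (Poly_Mapping.lookup q m2) * mon s m2))"
    by (subst mult_repr) (simp add: subst_sum subst_single mon_add Const_mult mult_ac)
  also have "\<dots> = subst s p * subst s q"
    by (simp add: subst_def mon_def sum_product)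
  finally show ?thesis .
qed

lemma subst_one [simp]: "subst s 1 = 1"
proof -
  have "(1 :: 'a mpoly) = Poly_Mapping.single 0 1" by simp
  then show ?thesis by (metis subst_single mon_zero Const_1 mult_1)
qed

interpretation subst: comm_ring_hom "subst s" for s
  by unfold_locales (simp_all add: subst_add subst_mult)

lemma subst_Var [simp]: "subst s (Var i) = s i"
  by (simp add: Var_def subst_single mon_def)

lemma subst_Const [simp]: "subst s (Const c) = Const c"
  by (simp add: Const_def subst_single)

lemma Var_power: "Var v ^ n = Poly_Mapping.single (Poly_Mapping.single v n) 1"
  by (induction n) (simp_all add: Var_def mult_single flip: single_add)

lemma prod_single_one:
  "(\<Prod>v\<in>S. Poly_Mapping.single (g v) (1::'a::comm_ring_1)) = Poly_Mapping.single (\<Sum>v\<in>S. g v) 1"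
  by (induction S rule: infinite_finite_induct) (simp_all add: mult_single)

lemma mon_Var: "mon Var m = Poly_Mapping.single m 1"
proof -
  have "mon Var m = Poly_Mapping.single (\<Sum>v\<in>Poly_Mapping.keys m. Poly_Mapping.single v (Poly_Mapping.lookup m v)) 1"
    by (simp add: mon_def Var_power prod_single_one)
  also have "(\<Sum>v\<in>Poly_Mapping.keys m. Poly_Mapping.single v (Poly_Mapping.lookup m v)) = m"
    by (rule pm_repr[symmetric]) auto
  finally show ?thesis .
qed

lemma subst_id: "subst Var p = p"
proof -
  have "subst Var p = (\<Sum>m\<in>Poly_Mapping.keys p. Poly_Mapping.single m (Poly_Mapping.lookup p m))"
    unfolding subst_def mon_def[symmetric] mon_Var by (simp add: Const_def mult_single)
  also have "\<dots> = p" by (rule pm_repr[symmetric]) auto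
  finally show ?thesis .
qed

lemma subst_cong:
  assumes "\<And>k. k \<in> mvars p \<Longrightarrow> s k = t k"
  shows "subst s p = subst t p"
proof -
  have "\<And>m v. m \<in> Poly_Mapping.keys p \<Longrightarrow> v \<in> Poly_Mapping.keys m \<Longrightarrow> s v = t v"
    using assms by (auto simp: mvars_def)
  then show ?thesis unfolding subst_def by (auto intro!: sum.cong prod.cong)
qed

lemma subst_subst: "subst t (subst s p) = subst (\<lambda>k. subst t (s k)) p"
  by (simp only: subst_def[of s p] subst_def[of "\<lambda>k. subst t (s k)" p] subst.hom_sum subst.hom_mult
      subst.hom_prod subst.hom_power subst_Const)

lemma dvd_diff_mult:
  fixes d :: "'b::comm_ring_1"
  assumes "d dvd a - b" "d dvd c - e"
  shows "d dvd a * c - b * e"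
proof -
  have "a * c - b * e = (a - b) * c + b * (c - e)" by (simp add: algebra_simps)
  then show ?thesis using assms by simp
qed

lemma dvd_diff_prod:
  fixes d :: "'b::comm_ring_1"
  assumes "\<And>x. x \<in> A \<Longrightarrow> d dvd f x - g x"
  shows "d dvd prod f A - prod g A"
  using assms
  by (induction A rule: infinite_finite_induct) (simp_all add: dvd_diff_mult)

lemma dvd_diff_power:
  fixes d :: "'b::comm_ring_1"
  assumes "d dvd a - b"
  shows "d dvd a ^ n - b ^ n"
  using assms by (induction n) (simp_all add: dvd_diff_mult)

lemma dvd_diff_sum:
  fixes d :: "'b::comm_ring_1"
  assumes "\<And>x. x \<in> A \<Longrightarrow> d dvd f x - g x"
  shows "d dvd sum f A - sum g A"
proof -
  have "d dvd (\<Sum>x\<in>A. f x - g x)" using assms by (intro dvd_sum) auto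
  then show ?thesis by (simp add: sum_subtractf)
qed

lemma subst_dvd_diff:
  assumes "\<And>k. d dvd s k - t k"
  shows "d dvd subst s p - subst t p"
  unfolding subst_def
  by (intro dvd_diff_sum dvd_diff_mult dvd_diff_prod dvd_diff_power assms) simp

lemma dvd_sub_Var: "(Var i - v) dvd p - subst (Var(i := v)) p"
proof -
  have "(Var i - v) dvd subst Var p - subst (Var(i := v)) p"
    by (rule subst_dvd_diff) auto
  then show ?thesis by (simp add: subst_id)
qed

lemma subst_Var_zero_dvd:
  assumes "subst (Var(i := v)) p = 0"
  shows "(Var i - v) dvd p"
  using dvd_sub_Var[of i v p] assms by simp


lemma ff_card_ge2: "card (UNIV :: 'a::{finite,field} set) \<ge> 2"
proof -
  have "card {0::'a, 1} \<le> card (UNIV :: 'a set)" by (rule card_mono) auto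
  then show ?thesis by simp
qed

lemma ff_power_card:
  fixes x :: "'a :: {finite,field}"
  shows "x ^ card (UNIV :: 'a set) = x"
proof (cases "x = 0")
  case False
  have "x * (\<Prod>y\<in>UNIV-{0}. x * y) = x * x ^ (card (UNIV :: 'a set) - 1) * \<Prod>(UNIV-{0})"
    by (simp add: prod.distrib mult_ac)
  also have "x * x ^ (card (UNIV :: 'a set) - 1) = x ^ Suc (card (UNIV :: 'a set) - 1)"
    by (subst power_Suc) auto
  also have "Suc (card (UNIV :: 'a set) - 1) = card (UNIV :: 'a set)"
    using finite_UNIV_card_ge_0[where ?'a = 'a] by simp
  also have "(\<Prod>y\<in>UNIV-{0}. x * y) = (\<Prod>y\<in>UNIV-{0}. y)"
    by (rule prod.reindex_bij_witness[of _ "\<lambda>y. y / x" "\<lambda>y. x * y"]) (use False in auto)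
  finally show ?thesis
    by simp
qed (use finite_UNIV_card_ge_0[where ?'a = 'a] in auto)

lemma ff_power_card_pow:
  fixes x :: "'a :: {finite,field}"
  shows "x ^ (card (UNIV :: 'a set) ^ n) = x"
  by (induction n) (simp_all add: ff_power_card power_mult)

lemma ff_choose_zero:
  assumes "0 < k" "k < card (UNIV :: 'a::{finite,field} set)"
  shows "of_nat (card (UNIV :: 'a set) choose k) = (0::'a)"
proof -
  let ?q = "card (UNIV :: 'a set)"
  have q2: "?q \<ge> 2" by (rule ff_card_ge2)
  define D :: "'a poly" where "D = [:1,1:] ^ ?q - monom 1 ?q - 1"
  have roots: "poly D x = 0" for x
    by (simp add: D_def poly_monom ff_power_card)
  have cq: "coeff D ?q = 0"
    using q2 by (simp add: D_def coeff_linear_poly_power coeff_monom)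
  have deg: "degree D \<le> ?q"
    unfolding D_def
    by (intro degree_diff_le order.trans[OF degree_power_le]) (auto simp: degree_monom_le)
  have "D = 0"
  proof (rule ccontr)
    assume "D \<noteq> 0"
    then have "card {x. poly D x = 0} \<le> degree D" by (rule card_poly_roots_bound)
    moreover have "{x. poly D x = 0} = UNIV" using roots by auto
    moreover have "degree D \<noteq> ?q" using cq \<open>D \<noteq> 0\<close> by (metis leading_coeff_0_iff)
    ultimately show False using deg by simp
  qed
  then have "coeff D k = 0" by simp
  moreover have "coeff D k = of_nat (?q choose k)"
    using assms by (simp add: D_def coeff_linear_poly_power coeff_monom coeff_1)
  ultimately show ?thesis by simp
qed

lemma of_nat_mpoly: "(of_nat n :: 'a::comm_ring_1 mpoly) = Const (of_nat n)"
  by (simp add: Const_def)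

lemma frob_add:
  fixes u v :: "'a::{finite,field} mpoly"
  shows "(u + v) ^ card (UNIV :: 'a set) = u ^ card (UNIV :: 'a set) + v ^ card (UNIV :: 'a set)"
proof -
  let ?q = "card (UNIV :: 'a set)"
  have q2: "?q \<ge> 2" by (rule ff_card_ge2)
  have "(u + v) ^ ?q = (\<Sum>k\<le>?q. of_nat (?q choose k) * u ^ k * v ^ (?q - k))"
    by (rule binomial_ring)
  also have "\<dots> = (\<Sum>k\<in>{0, ?q}. of_nat (?q choose k) * u ^ k * v ^ (?q - k))"
  proof (intro sum.mono_neutral_right ballI)
    fix k assume "k \<in> {..?q} - {0, ?q}"
    then have "0 < k" "k < ?q" by auto
    then show "of_nat (?q choose k) * u ^ k * v ^ (?q - k) = 0"
      by (simp add: of_nat_mpoly ff_choose_zero)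
  qed auto
  finally show ?thesis using q2 by (simp add: add_ac)
qed

lemma frob_pow_add:
  fixes u v :: "'a::{finite,field} mpoly"
  shows "(u + v) ^ (card (UNIV :: 'a set) ^ n) = u ^ (card (UNIV :: 'a set) ^ n) + v ^ (card (UNIV :: 'a set) ^ n)"
proof (induction n)
  case (Suc n)
  have "(u + v) ^ (card (UNIV :: 'a set) ^ Suc n) = ((u + v) ^ (card (UNIV :: 'a set) ^ n)) ^ card (UNIV :: 'a set)"
    by (simp add: power_mult[symmetric] mult.commute)
  also have "\<dots> = (u ^ (card (UNIV :: 'a set) ^ n)) ^ card (UNIV :: 'a set) + (v ^ (card (UNIV :: 'a set) ^ n)) ^ card (UNIV :: 'a set)"
    by (simp add: Suc.IH frob_add)
  finally show ?case by (simp add: power_mult[symmetric] mult.commute)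
qed simp

lemma frob_sum:
  fixes f :: "'b \<Rightarrow> 'a::{finite,field} mpoly"
  shows "(sum f A) ^ (card (UNIV :: 'a set) ^ n) = (\<Sum>x\<in>A. f x ^ (card (UNIV :: 'a set) ^ n))"
  using finite_UNIV_card_ge_0[where ?'a = 'a]
  by (induction A rule: infinite_finite_induct) (simp_all add: frob_pow_add)

lemma frob_Const:
  fixes u :: "'a::{finite,field} mpoly"
  shows "(Const c * u) ^ (card (UNIV :: 'a set) ^ n) = Const c * u ^ (card (UNIV :: 'a set) ^ n)"
  by (simp add: power_mult_distrib ff_power_card_pow flip: Const_power)

lemma frob_lin:
  fixes u :: "nat \<Rightarrow> 'a::{finite,field} mpoly"
  shows "(\<Sum>j\<in>A. Const (c j) * u j) ^ (card (UNIV :: 'a set) ^ n) = (\<Sum>j\<in>A. Const (c j) * u j ^ (card (UNIV :: 'a set) ^ n))"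
  by (simp add: frob_sum frob_Const)


lemma cofactor_cong_col:
  assumes "A \<in> carrier_mat n n" "B \<in> carrier_mat n n"
    and "\<And>r k. r < n \<Longrightarrow> k < n \<Longrightarrow> k \<noteq> j \<Longrightarrow> A $$ (r,k) = B $$ (r,k)"
  shows "cofactor A i j = cofactor B i j"
proof -
  have "mat_delete A i j = mat_delete B i j"
    unfolding mat_delete_def using assms by (intro eq_matI) auto
  then show ?thesis by (simp add: cofactor_def)
qed

lemma det_colcomb:
  fixes A :: "'b::comm_ring_1 mat"
  assumes A: "A \<in> carrier_mat n n" and i: "i < n" and J: "J \<subseteq> {..<n}" "i \<notin> J"
    and col: "\<And>r. r < n \<Longrightarrow> A $$ (r,i) = (\<Sum>j\<in>J. c j * A $$ (r,j)) + v r"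
  shows "det A = (\<Sum>r<n. v r * cofactor A r i)"
proof -
  define B where "B j = mat n n (\<lambda>(r,k). if k = i then A $$ (r,j) else A $$ (r,k))" for j
  have B: "B j \<in> carrier_mat n n" for j by (simp add: B_def)
  have cof: "cofactor (B j) r i = cofactor A r i" for j r
    by (rule cofactor_cong_col[OF B A]) (auto simp: B_def)
  have detB: "det (B j) = (\<Sum>r<n. A $$ (r,j) * cofactor A r i)" for j
  proof -
    have "det (B j) = (\<Sum>r<n. B j $$ (r,i) * cofactor (B j) r i)" by (rule laplace_expansion_column[OF B i])
    also have "\<dots> = (\<Sum>r<n. A $$ (r,j) * cofactor A r i)"
      by (intro sum.cong refl) (simp only: cof, simp add: B_def i)
    finally show ?thesis .
  qed
  have B0: "det (B j) = 0" if "j \<in> J" for j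
  proof (rule det_identical_columns[OF B, of i j])
    show "i \<noteq> j" using that J by auto
    show "i < n" by fact
    show "j < n" using that J by auto
    show "col (B j) i = col (B j) j" using that J i B[of j] by (intro eq_vecI) (auto simp: B_def)
  qed
  have "det A = (\<Sum>r<n. A $$ (r,i) * cofactor A r i)" by (rule laplace_expansion_column[OF A i])
  also have "\<dots> = (\<Sum>r<n. (\<Sum>j\<in>J. c j * (A $$ (r,j) * cofactor A r i)) + v r * cofactor A r i)"
    by (intro sum.cong refl) (simp add: col distrib_right sum_distrib_right mult.assoc)
  also have "\<dots> = (\<Sum>j\<in>J. c j * det (B j)) + (\<Sum>r<n. v r * cofactor A r i)"
    by (simp add: sum.distrib detB sum_distrib_left sum.swap[of _ J])
  also have "\<dots> = (\<Sum>r<n. v r * cofactor A r i)" using B0 by simp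
  finally show ?thesis .
qed


definition lin :: "(nat \<Rightarrow> 'a::comm_ring_1) \<Rightarrow> nat \<Rightarrow> 'a mpoly" where
  "lin cs i = (\<Sum>j\<in>{1..i-1}. Const (cs j) * Var j)"

definition Vs :: "nat \<Rightarrow> 'a::comm_ring_1 mpoly set" where
  "Vs i = (\<lambda>cs. lin cs i) ` (PiE {1..i-1} (\<lambda>_. UNIV))"

lemma Const_mult_Var: "Const c * Var j = Poly_Mapping.single (Poly_Mapping.single j 1) c"
  by (simp add: Const_def Var_def mult_single)

lemma single_one_eq_iff [simp]: "Poly_Mapping.single j (Suc 0) = Poly_Mapping.single k (Suc 0) \<longleftrightarrow> j = k"
  by (metis lookup_single_eq lookup_single_not_eq nat.distinct(1))

lemma lookup_lin: "Poly_Mapping.lookup (lin cs i) (Poly_Mapping.single k 1) = (if k \<in> {1..i-1} then cs k else 0)"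
proof -
  have "Poly_Mapping.lookup (lin cs i) (Poly_Mapping.single k 1) =
        (\<Sum>j\<in>{1..i-1}. if k = j then cs j else 0)"
    unfolding lin_def Const_mult_Var lookup_sum lookup_single
    by (intro sum.cong refl) (auto simp: when_def single_one_eq_iff)
  then show ?thesis by simp
qed

lemmas lookup_lin' = lookup_lin[simplified]

lemma lookup_Var: "Poly_Mapping.lookup (Var i) (Poly_Mapping.single k 1) = (if k = i then 1 else 0)"
  by (simp add: Var_def lookup_single when_def)

lemmas lookup_Var' = lookup_Var[simplified]

lemma lin_in_Vs: "lin cs i \<in> Vs i"
  unfolding Vs_def by (rule image_eqI[of _ _ "restrict cs {1..i-1}"]) (auto simp: lin_def intro!: sum.cong)

lemma Vs_lin: "w \<in> Vs i \<Longrightarrow> \<exists>cs. w = lin cs i"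
  unfolding Vs_def by auto

lemma inj_lin: "inj_on (\<lambda>cs. lin cs i) (PiE {1..i-1} (\<lambda>_. UNIV))"
proof (rule inj_onI)
  fix cs cs' assume cs: "cs \<in> PiE {1..i-1} (\<lambda>_. UNIV)" and cs': "cs' \<in> PiE {1..i-1} (\<lambda>_. UNIV)"
    and eq: "lin cs i = lin cs' i"
  show "cs = cs'"
  proof (rule PiE_ext[OF cs cs'])
    fix k assume "k \<in> {1..i-1}"
    then show "cs k = cs' k" using arg_cong[OF eq, of "\<lambda>p. Poly_Mapping.lookup p (Poly_Mapping.single k 1)"]
      by (simp add: lookup_lin')
  qed
qed

lemma finite_Vs: "finite (Vs (i::nat) :: 'a::{finite,comm_ring_1} mpoly set)"
  unfolding Vs_def by (intro finite_imageI finite_PiE) auto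

lemma card_Vs: "card (Vs i :: 'a::{finite,comm_ring_1} mpoly set) = card (UNIV :: 'a set) ^ (i - 1)"
proof -
  have "card (Vs i :: 'a mpoly set) = card (PiE {1..i-1} (\<lambda>_. UNIV :: 'a set))"
    unfolding Vs_def by (rule card_image[OF inj_lin])
  also have "\<dots> = card (UNIV :: 'a set) ^ (i - 1)" by (simp add: card_PiE)
  finally show ?thesis .
qed

lemma subst_lin: "subst s (lin cs i) = (\<Sum>j\<in>{1..i-1}. Const (cs j) * s j)"
  by (simp add: lin_def subst.hom_sum subst.hom_mult)

lemma subst_lin_fix:
  assumes "\<And>j. 1 \<le> j \<Longrightarrow> j < i \<Longrightarrow> s j = Var j"
  shows "subst s (lin cs i) = lin cs i"
proof -
  have "subst s (lin cs i) = (\<Sum>j\<in>{1..i-1}. Const (cs j) * s j)" by (rule subst_lin)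
  also have "\<dots> = lin cs i" unfolding lin_def using assms by (intro sum.cong refl) auto
  finally show ?thesis .
qed

lemma subst_Vs_fix: "w \<in> Vs i \<Longrightarrow> subst (Var(i := u)) w = w"
  using Vs_lin[of w i] subst_lin_fix[of i "Var(i := u)"] by fastforce

lemma Var_minus_Vs_nz: "w \<in> Vs i \<Longrightarrow> Var i - w \<noteq> 0"
proof
  assume "w \<in> Vs i" "Var i - w = 0"
  then obtain cs where "w = lin cs i" using Vs_lin by blast
  then have "Poly_Mapping.lookup (Var i - lin cs i) (Poly_Mapping.single i 1) = 0"
    using \<open>Var i - w = 0\<close> by simp
  then show False by (simp add: lookup_minus lookup_Var' lookup_lin' split: if_splits)
qed

lemma Var_nz: "Var i \<noteq> (0::'a::comm_ring_1 mpoly)"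
  by (metis Var_def lookup_single_eq one_neq_zero lookup_zero)

lemma roots_prod_dvd:
  fixes h :: "'a::idom mpoly"
  assumes "finite S" "\<And>w u. w \<in> S \<Longrightarrow> subst (Var(i:=u)) w = w"
    "\<And>w. w \<in> S \<Longrightarrow> subst (Var(i:=w)) h = 0"
  shows "(\<Prod>w\<in>S. Var i - w) dvd h"
  using assms
proof (induction S rule: finite_induct)
  case empty then show ?case by simp
next
  case (insert w0 S)
  then have "(\<Prod>w\<in>S. Var i - w) dvd h" by auto
  then obtain k where hk: "h = (\<Prod>w\<in>S. Var i - w) * k" by (elim dvdE)
  have fx: "\<And>x. x \<in> S \<Longrightarrow> subst (Var(i:=w0)) x = x" using insert.prems(1) by blast
  have "0 = subst (Var(i:=w0)) h" using insert.prems(2)[of w0] by (simp add: fun_upd_def)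
  also have "\<dots> = (\<Prod>w\<in>S. w0 - subst (Var(i:=w0)) w) * subst (Var(i:=w0)) k"
    unfolding hk subst.hom_mult subst.hom_prod subst.hom_minus by simp
  also have "\<dots> = (\<Prod>w\<in>S. w0 - w) * subst (Var(i:=w0)) k"
    using fx by (metis (no_types, lifting) prod.cong)
  finally have eq: "(\<Prod>w\<in>S. w0 - w) * subst (Var(i:=w0)) k = 0" by simp
  have "(\<Prod>w\<in>S. w0 - w) \<noteq> 0" using insert by (auto simp: prod_zero_iff)
  with eq have "subst (Var(i:=w0)) k = 0" by simp
  then have "(Var i - w0) dvd k" by (rule subst_Var_zero_dvd)
  then show ?case using insert hk by (auto intro: mult_dvd_mono)
qed


lemma hom_poly_eval: "comm_ring_hom (\<lambda>p. poly p x)"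
  by unfold_locales simp_all

lemma hom_const_poly: "comm_ring_hom (\<lambda>c. [:c:])"
  by unfold_locales (simp_all add: one_pCons)

lemma cofactor_map:
  assumes h: "comm_ring_hom h" and A: "A \<in> carrier_mat n n" and r: "r < n" and j: "j < n"
  shows "cofactor (map_mat h A) r j = h (cofactor A r j)"
proof -
  interpret comm_ring_hom h by fact
  have "mat_delete (map_mat h A) r j = map_mat h (mat_delete A r j)"
    using A r j unfolding mat_delete_def by (intro eq_matI) auto
  then show ?thesis
    by (simp add: cofactor_def hom_mult hom_power hom_uminus hom_det)
qed

lemma poly_roots_prod_dvd:
  fixes p :: "'b::idom poly"
  assumes "finite S" "\<And>w. w \<in> S \<Longrightarrow> poly p w = 0"
  shows "(\<Prod>w\<in>S. [:-w, 1:]) dvd p"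
  using assms
proof (induction S rule: finite_induct)
  case empty then show ?case by simp
next
  case (insert w0 S)
  then have "(\<Prod>w\<in>S. [:-w, 1:]) dvd p" by auto
  then obtain k where pk: "p = (\<Prod>w\<in>S. [:-w, 1:]) * k" by (elim dvdE)
  have "0 = poly p w0" using insert by auto
  also have "\<dots> = (\<Prod>w\<in>S. w0 - w) * poly k w0"
    by (simp add: pk poly_prod)
  finally have eq: "(\<Prod>w\<in>S. w0 - w) * poly k w0 = 0" by simp
  have "(\<Prod>w\<in>S. w0 - w) \<noteq> 0" using insert by (auto simp: prod_zero_iff)
  with eq have "poly k w0 = 0" by simp
  then have "[:-w0, 1:] dvd k" by (simp add: poly_eq_0_iff_dvd)
  then have "[:-w0, 1:] * (\<Prod>w\<in>S. [:-w, 1:]) dvd k * (\<Prod>w\<in>S. [:-w, 1:])"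
    by (rule mult_dvd_mono) simp
  moreover have "(\<Prod>w\<in>insert w0 S. [:-w, 1:]) = [:-w0, 1:] * (\<Prod>w\<in>S. [:-w, 1:])"
    using insert(1,2) by simp
  ultimately show ?case using pk by (simp add: mult.commute)
qed

lemma sum_shift1: "(\<Sum>j\<in>{1..i-1}. g j) = (\<Sum>j<i-1. g (Suc j))"
  by (rule sum.reindex_bij_witness[of _ Suc "\<lambda>j. j - 1"]) auto

abbreviation MM :: "nat \<Rightarrow> 'a::{finite,field} mpoly mat" where
  "MM n \<equiv> mat n n (\<lambda>(t, j). Var (j + 1) ^ (card (UNIV :: 'a set) ^ t))"

definition PP :: "nat \<Rightarrow> 'a::{finite,field} mpoly" where
  "PP i = (\<Prod>w\<in>Vs i. Var i - w)"

lemma mooreL_def': "mooreL (card (UNIV :: 'a set)) n = det (MM n :: 'a::{finite,field} mpoly mat)"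
  by (simp add: mooreL_def)

lemma frob_lin_shift:
  fixes cs :: "nat \<Rightarrow> 'a::{finite,field}"
  shows "lin cs i ^ (card (UNIV :: 'a set) ^ t) = (\<Sum>j<i-1. Const (cs (Suc j)) * Var (j + 1) ^ (card (UNIV :: 'a set) ^ t))"
  unfolding lin_def frob_lin sum_shift1 by simp

lemma moore_factor:
  assumes i: "1 \<le> i"
  shows "mooreL (card (UNIV :: 'a set)) i = mooreL (card (UNIV :: 'a set)) (i - 1) * (PP i :: 'a::{finite,field} mpoly)"
proof -
  let ?q = "card (UNIV :: 'a set)"
  define m where "m = i - 1"
  have im: "i = Suc m" using i by (simp add: m_def)
  have q2: "?q \<ge> 2" by (rule ff_card_ge2)
  define AX :: "'a mpoly poly mat" where
    "AX = mat i i (\<lambda>(t, j). if j = m then monom 1 (?q ^ t) else [: Var (j + 1) ^ (?q ^ t) :])"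
  have AX: "AX \<in> carrier_mat i i" by (simp add: AX_def)
  have mi: "m < i" by (simp add: im)
  define \<gamma> where "\<gamma> r = cofactor (MM i :: 'a mpoly mat) r m" for r
  have eval: "poly (det AX) x = det (mat i i (\<lambda>(t, j). if j = m then x ^ (?q ^ t) else Var (j + 1) ^ (?q ^ t)))" for x
  proof -
    interpret e: comm_ring_hom "\<lambda>p. poly p x" by (rule hom_poly_eval)
    have "poly (det AX) x = det (map_mat (\<lambda>p. poly p x) AX)" by simp
    also have "map_mat (\<lambda>p. poly p x) AX = mat i i (\<lambda>(t, j). if j = m then x ^ (?q ^ t) else Var (j + 1) ^ (?q ^ t))"
      by (intro eq_matI) (auto simp: AX_def poly_monom)
    finally show ?thesis .
  qed
  have evalVar: "poly (det AX) (Var i) = mooreL ?q i"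
    unfolding eval mooreL_def'
    by (intro arg_cong[where f = det] eq_matI) (auto simp: im)
  have roots: "poly (det AX) w = 0" if w: "w \<in> Vs i" for w
  proof -
    obtain cs where wcs: "w = lin cs i" using Vs_lin[OF w] by blast
    have "poly (det AX) w = det (mat i i (\<lambda>(t, j). if j = m then w ^ (?q ^ t) else Var (j + 1) ^ (?q ^ t)))"
      by (rule eval)
    also have "\<dots> = (\<Sum>r<i. 0 * cofactor (mat i i (\<lambda>(t, j). if j = m then w ^ (?q ^ t) else Var (j + 1) ^ (?q ^ t))) r m)"
    proof (rule det_colcomb[where J = "{..<m}" and c = "\<lambda>j. Const (cs (Suc j))"])
      fix r assume r: "r < i"
      show "mat i i (\<lambda>(t, j). if j = m then w ^ (?q ^ t) else Var (j + 1) ^ (?q ^ t)) $$ (r, m) =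
        (\<Sum>j<m. Const (cs (Suc j)) * mat i i (\<lambda>(t, j). if j = m then w ^ (?q ^ t) else Var (j + 1) ^ (?q ^ t)) $$ (r, j)) + 0"
        using r mi by (simp add: wcs frob_lin_shift m_def)
    qed (auto simp: im)
    also have "\<dots> = 0" by simp
    finally show ?thesis .
  qed
  have cofAX: "cofactor AX r m = [: \<gamma> r :]" if r: "r < i" for r
  proof -
    have "cofactor AX r m = cofactor (map_mat (\<lambda>c. [:c:]) (MM i :: 'a mpoly mat)) r m"
      by (rule cofactor_cong_col[OF AX]) (auto simp: AX_def)
    also have "\<dots> = [: \<gamma> r :]"
      unfolding \<gamma>_def by (rule cofactor_map[OF hom_const_poly]) (auto simp: r mi)
    finally show ?thesis .
  qed
  have detAX: "det AX = (\<Sum>r<i. monom (\<gamma> r) (?q ^ r))"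
  proof -
    have "det AX = (\<Sum>r<i. AX $$ (r, m) * cofactor AX r m)" by (rule laplace_expansion_column[OF AX mi])
    also have "\<dots> = (\<Sum>r<i. monom (\<gamma> r) (?q ^ r))"
    proof (intro sum.cong refl)
      fix r assume "r \<in> {..<i}"
      then have r: "r < i" by simp
      have a: "AX $$ (r, m) = monom 1 (?q ^ r)" using r mi by (simp add: AX_def)
      have b: "[: \<gamma> r :] = monom (\<gamma> r) 0" by (simp add: monom_0)
      show "AX $$ (r, m) * cofactor AX r m = monom (\<gamma> r) (?q ^ r)"
        unfolding a cofAX[OF r] b mult_monom by simp
    qed
    finally show ?thesis .
  qed
  have inj: "?q ^ r = ?q ^ m \<longleftrightarrow> r = m" for r
    using q2 by (simp add: power_inject_exp)
  have coeffm: "coeff (det AX) (?q ^ m) = \<gamma> m"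
    unfolding detAX coeff_sum using mi by (simp add: inj)
  have degAX: "degree (det AX) \<le> ?q ^ m"
    unfolding detAX
  proof (rule degree_sum_le)
    fix r assume "r \<in> {..<i}"
    then have "r \<le> m" by (simp add: im)
    then have "?q ^ r \<le> ?q ^ m" using q2 by (intro power_increasing) auto
    then show "degree (monom (\<gamma> r) (?q ^ r)) \<le> ?q ^ m" using degree_monom_le order.trans by blast
  qed simp
  have gm: "\<gamma> m = mooreL ?q m"
  proof -
    have "mat_delete (MM i :: 'a mpoly mat) m m = MM m"
      unfolding mat_delete_def by (intro eq_matI) (auto simp: im)
    then show ?thesis by (simp add: \<gamma>_def cofactor_def mooreL_def')
  qed
  define Pi where "Pi = (\<Prod>w\<in>Vs i. [:-w, 1::'a mpoly:])"
  have fin: "finite (Vs i :: 'a mpoly set)" by (rule finite_Vs)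
  have Pidvd: "Pi dvd det AX" unfolding Pi_def by (rule poly_roots_prod_dvd[OF fin roots])
  have degPi: "degree Pi = ?q ^ m"
    unfolding Pi_def by (subst degree_prod_sum_eq) (auto simp: card_Vs m_def)
  have lcPi: "lead_coeff Pi = 1" unfolding Pi_def by (simp add: lead_coeff_prod)
  have Pinz: "Pi \<noteq> 0" using lcPi by auto
  obtain H where H: "det AX = Pi * H" using Pidvd by (elim dvdE)
  have main: "det AX = Pi * [: mooreL ?q m :]"
  proof (cases "H = 0")
    case True
    then have "det AX = 0" using H by simp
    then have "\<gamma> m = 0" using coeffm by simp
    then show ?thesis using True H gm by simp
  next
    case False
    have "degree (det AX) = ?q ^ m + degree H" using H degree_mult_eq[OF Pinz False] degPi by simp
    then have dH: "degree H = 0" using degAX by simp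
    then have Hc: "H = [: coeff H 0 :]" by (simp add: degree_0_id)
    have "coeff (det AX) (?q ^ m) = coeff H 0"
      using H Hc degPi lcPi by (metis mult.commute coeff_mult_degree_sum dH add_0 mult_1 lead_coeff_pCons(1) pCons_0_0 one_pCons)
    then have "coeff H 0 = mooreL ?q m" using coeffm gm by simp
    then show ?thesis using H Hc by simp
  qed
  have "mooreL ?q i = poly (det AX) (Var i)" by (simp add: evalVar)
  also have "\<dots> = poly Pi (Var i) * mooreL ?q m" by (simp add: main)
  also have "poly Pi (Var i) = PP i" by (simp add: Pi_def PP_def poly_prod)
  finally show ?thesis by (simp add: m_def mult.commute)
qed


lemma mooreL_0: "mooreL q 0 = (1 :: 'a::comm_ring_1 mpoly)"
  by (simp add: mooreL_def det_def)

lemma PP_nz: "PP i \<noteq> (0 :: 'a::{finite,field} mpoly)"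
proof
  assume "PP i = (0 :: 'a mpoly)"
  then have "\<exists>w\<in>Vs i. Var i - w = (0 :: 'a mpoly)"
    unfolding PP_def by (subst (asm) prod_zero_iff[OF finite_Vs])
  then show False using Var_minus_Vs_nz by blast
qed

lemma mooreL_nz: "mooreL (card (UNIV :: 'a set)) i \<noteq> (0 :: 'a::{finite,field} mpoly)"
proof (induction i)
  case 0 then show ?case by (simp add: mooreL_0)
next
  case (Suc i)
  then show ?case using moore_factor[of "Suc i", where 'a = 'a] PP_nz[of "Suc i", where 'a = 'a] by simp
qed

lemma subst_fix_MM:
  assumes "\<And>j. 1 \<le> j \<Longrightarrow> j \<le> n \<Longrightarrow> s j = Var j"
  shows "subst s (mooreL (card (UNIV :: 'a set)) n) = (mooreL (card (UNIV :: 'a set)) n :: 'a::{finite,field} mpoly)"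
proof -
  have "subst s (mooreL (card (UNIV :: 'a set)) n) = det (map_mat (subst s) (MM n :: 'a mpoly mat))"
    by (simp add: mooreL_def')
  also have "map_mat (subst s) (MM n :: 'a mpoly mat) = MM n"
    using assms by (intro eq_matI) (auto simp: subst.hom_power)
  finally show ?thesis by (simp add: mooreL_def')
qed

locale thm9 =
  fixes f :: "'a::{finite,field} mpoly" and a b c :: nat
  assumes a1: "1 \<le> a" and ac: "a \<le> c + 1" and fv: "mvars f \<subseteq> {1..c}"
begin

definition Nm :: "'a mpoly mat" where
  "Nm = mat a a (\<lambda>(t, j). if t + 1 < a then Var (j + 1) ^ (card (UNIV :: 'a set) ^ t) else Var (j + 1) ^ (card (UNIV :: 'a set) ^ b) * omit (j + 1) f)"

lemma deltaN_Nm: "deltaN (card (UNIV :: 'a set)) a b f = det Nm"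
  by (simp add: deltaN_def Nm_def)

definition sg :: "nat \<Rightarrow> (nat \<Rightarrow> 'a) \<Rightarrow> 'a mpoly \<Rightarrow> 'a mpoly" where
  "sg i cs = subst (Var(i := lin cs i))"

definition ee :: "nat \<Rightarrow> (nat \<Rightarrow> 'a) \<Rightarrow> 'a mpoly" where
  "ee i cs = lin cs i ^ (card (UNIV :: 'a set) ^ b) * sg i cs (omit i f) -
     (\<Sum>j\<in>{1..i-1}. Const (cs j) * Var j ^ (card (UNIV :: 'a set) ^ b) * sg i cs (omit j f))"

lemma sigmaN:
  assumes i1: "1 \<le> i" and ia: "i \<le> a"
  shows "sg i cs (det Nm) = ee i cs * cofactor (map_mat (sg i cs) Nm) (a - 1) (i - 1)"
proof -
  let ?A = "map_mat (sg i cs) Nm"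
  have A: "?A \<in> carrier_mat a a" by (simp add: Nm_def)
  have sgVar: "sg i cs (Var k) = (if k = i then lin cs i else Var k)" for k
    by (simp add: sg_def)
  have ent: "?A $$ (r, j) = (if r + 1 < a then sg i cs (Var (j + 1)) ^ (card (UNIV :: 'a set) ^ r)
      else sg i cs (Var (j + 1)) ^ (card (UNIV :: 'a set) ^ b) * sg i cs (omit (j + 1) f))" if "r < a" "j < a" for r j
    using that by (simp add: Nm_def sg_def subst.hom_power subst.hom_mult)
  have "sg i cs (det Nm) = det ?A" by (simp add: sg_def)
  also have "\<dots> = (\<Sum>r<a. (if r = a - 1 then ee i cs else 0) * cofactor ?A r (i - 1))"
  proof (rule det_colcomb[OF A, where J = "{..<i-1}" and c = "\<lambda>j. Const (cs (Suc j))"])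
    show "i - 1 < a" using i1 ia by simp
    show "{..<i - 1} \<subseteq> {..<a}" using ia by auto
    show "i - 1 \<notin> {..<i - 1}" by simp
    fix r assume r: "r < a"
    have ent_j: "?A $$ (r, j) = (if r + 1 < a then Var (j + 1) ^ (card (UNIV :: 'a set) ^ r)
      else Var (j + 1) ^ (card (UNIV :: 'a set) ^ b) * sg i cs (omit (j + 1) f))" if "j < i - 1" for j
      using that ia r by (subst ent) (auto simp: sgVar)
    have ent_i: "?A $$ (r, i - 1) = (if r + 1 < a then lin cs i ^ (card (UNIV :: 'a set) ^ r)
      else lin cs i ^ (card (UNIV :: 'a set) ^ b) * sg i cs (omit i f))"
      using i1 ia r by (subst ent) (auto simp: sgVar)
    show "?A $$ (r, i - 1) = (\<Sum>j<i-1. Const (cs (Suc j)) * ?A $$ (r, j)) + (if r = a - 1 then ee i cs else 0)"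
    proof (cases "r + 1 < a")
      case True
      then show ?thesis unfolding ent_i by (simp add: ent_j frob_lin_shift)
    next
      case False
      then have ra: "r = a - 1" using r by simp
      have "(\<Sum>j<i-1. Const (cs (Suc j)) * ?A $$ (r, j)) =
            (\<Sum>j<i-1. Const (cs (Suc j)) * (Var (j + 1) ^ (card (UNIV :: 'a set) ^ b) * sg i cs (omit (j + 1) f)))"
        using False by (intro sum.cong refl) (simp add: ent_j)
      also have "\<dots> = (\<Sum>j\<in>{1..i-1}. Const (cs j) * Var j ^ (card (UNIV :: 'a set) ^ b) * sg i cs (omit j f))"
        unfolding sum_shift1 by (simp add: mult.assoc)
      finally show ?thesis unfolding ent_i using False ra by (simp add: ee_def)
    qed
  qed
  also have "\<dots> = (\<Sum>r<a. if r = a - 1 then ee i cs * cofactor ?A r (i - 1) else 0)"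
    by (intro sum.cong refl) simp
  also have "\<dots> = ee i cs * cofactor ?A (a - 1) (i - 1)"
    using a1 by (simp add: sum.delta)
  finally show ?thesis .
qed

end


definition uu :: "nat \<Rightarrow> nat \<Rightarrow> 'a::comm_ring_1 mpoly \<Rightarrow> nat \<Rightarrow> 'a mpoly" where
  "uu i j v = (\<lambda>k. if k < j then Var k else if k + 1 = i then v else Var (k + 1))"

definition pii :: "nat \<Rightarrow> nat \<Rightarrow> nat \<Rightarrow> nat" where
  "pii a m k = (if k < m then k else if k + 1 = a then m else if k < a then k + 1 else k)"

lemma sum_delta_Const:
  assumes "finite S" "m \<in> S"
  shows "(\<Sum>j\<in>S. Const (if j = m then 1 else 0) * g j) = g m"
proof -
  have "(\<Sum>j\<in>S. Const (if j = m then 1 else 0) * g j) = (\<Sum>j\<in>S. if j = m then g j else 0)"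
    by (intro sum.cong refl) simp
  also have "\<dots> = g m" using assms by (simp add: sum.delta)
  finally show ?thesis .
qed

lemma sum_restrict_coef:
  fixes i a :: nat
  assumes "i \<le> a"
  shows "(\<Sum>j\<in>{1..a-1}. Const (if j < i then cs j else 0) * g j) = (\<Sum>j\<in>{1..i-1}. Const (cs j) * g j)"
proof (rule sum.mono_neutral_cong_right)
  show "finite {1..a-1}" by simp
  show "{1..i-1} \<subseteq> {1..a-1}" using assms by auto
  show "\<forall>x\<in>{1..a-1} - {1..i-1}. Const (if x < i then cs x else 0) * g x = 0" by auto
  show "\<And>x. x \<in> {1..i-1} \<Longrightarrow> Const (if x < i then cs x else 0) * g x = Const (cs x) * g x" by auto
qed

context thm9
begin

definition Hc :: "(nat \<Rightarrow> 'a) \<Rightarrow> bool" where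
  "Hc cs \<longleftrightarrow> (let y = (\<Sum>j\<in>{1..a-1}. Const (cs j) * Var j) in
      (\<Sum>i\<in>{1..a-1}. Const (cs i) * Var i ^ ((card (UNIV :: 'a set)) ^ b) *
          subst (\<lambda>k. if k < i then Var k else if k + 1 = a then y else Var (k + 1)) f)
      = (\<Sum>j\<in>{1..a-1}. Const (cs j) * Var j ^ ((card (UNIV :: 'a set)) ^ b)) * omit a f)"

lemma Hc_expl: "Hc cs \<longleftrightarrow>
   (\<Sum>i\<in>{1..a-1}. Const (cs i) * Var i ^ ((card (UNIV :: 'a set)) ^ b) * subst (uu a i (lin cs a)) f)
      = (\<Sum>j\<in>{1..a-1}. Const (cs j) * Var j ^ ((card (UNIV :: 'a set)) ^ b)) * omit a f"
  unfolding Hc_def Let_def lin_def uu_def by (rule refl)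

lemma omit_eq: "omit i f = subst (\<lambda>k. if k < i then Var k else Var (k + 1)) f"
  by (simp add: omit_def)

lemma sg_omit_self: "sg i cs (omit i f) = omit i f"
  unfolding sg_def omit_eq subst_subst
  by (intro arg_cong[where f = "\<lambda>s. subst s f"] ext) auto

lemma sg_omit_lt:
  assumes "j < i"
  shows "sg i cs (omit j f) = subst (uu i j (lin cs i)) f"
  unfolding sg_def omit_eq subst_subst uu_def
  using assms by (intro arg_cong[where f = "\<lambda>s. subst s f"] ext) auto

lemma rot:
  assumes H: "\<And>cs. Hc cs" and m: "1 \<le> m" "m \<le> a - 1"
  shows "subst (\<lambda>k. u (pii a m k)) f = subst u f"
proof -
  let ?Q = "card (UNIV :: 'a set) ^ b"
  define \<delta> where "\<delta> = (\<lambda>j. if j = m then 1 else (0::'a))"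
  have mS: "m \<in> {1..a-1}" using m by auto
  have lin: "lin \<delta> a = Var m"
    unfolding lin_def \<delta>_def by (rule sum_delta_Const[OF _ mS]) simp
  have s1: "(\<Sum>i\<in>{1..a-1}. Const (\<delta> i) * (Var i ^ ?Q * subst (uu a i (Var m)) f)) = Var m ^ ?Q * subst (uu a m (Var m)) f"
    unfolding \<delta>_def by (rule sum_delta_Const[OF _ mS]) simp
  have s2: "(\<Sum>j\<in>{1..a-1}. Const (\<delta> j) * Var j ^ ?Q) = Var m ^ ?Q"
    unfolding \<delta>_def by (rule sum_delta_Const[OF _ mS]) simp
  have "(\<Sum>i\<in>{1..a-1}. Const (\<delta> i) * Var i ^ ?Q * subst (uu a i (lin \<delta> a)) f)
      = (\<Sum>j\<in>{1..a-1}. Const (\<delta> j) * Var j ^ ?Q) * omit a f"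
    using H[of \<delta>] by (simp only: Hc_expl)
  then have "Var m ^ ?Q * subst (uu a m (Var m)) f = Var m ^ ?Q * omit a f"
    by (simp only: lin mult.assoc s1 s2)
  then have eq: "subst (uu a m (Var m)) f = omit a f"
    using Var_nz[of m, where 'a = 'a] by simp
  define \<theta> where "\<theta> = (\<lambda>k. if k < a then u k else u (k - 1))"
  have "subst \<theta> (subst (uu a m (Var m)) f) = subst \<theta> (omit a f)" using eq by simp
  moreover have "subst \<theta> (subst (uu a m (Var m)) f) = subst (\<lambda>k. u (pii a m k)) f"
    unfolding subst_subst uu_def pii_def \<theta>_def using m
    by (intro arg_cong[where f = "\<lambda>s. subst s f"] ext) auto
  moreover have "subst \<theta> (omit a f) = subst u f"
    unfolding omit_eq subst_subst \<theta>_def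
    by (intro arg_cong[where f = "\<lambda>s. subst s f"] ext) auto
  ultimately show ?thesis by simp
qed

end


context thm9
begin

lemma ee_zero:
  assumes H: "\<And>cs. Hc cs" and i: "1 \<le> i" "i \<le> a"
  shows "ee i cs = 0"
proof -
  let ?Q = "card (UNIV :: 'a set) ^ b"
  define v where "v = lin cs i"
  define cs' where "cs' = (\<lambda>j. if j < i then cs j else 0)"
  define r where "r = (\<lambda>k. if k < i then Var k else if k < a then Var (k + 1) else (Var k :: 'a mpoly))"
  have lin': "lin cs' a = v" unfolding lin_def v_def cs'_def by (rule sum_restrict_coef[OF i(2)])
  have Hs: "(\<Sum>j\<in>{1..i-1}. Const (cs j) * (Var j ^ ?Q * subst (uu a j v) f)) =
      (\<Sum>j\<in>{1..i-1}. Const (cs j) * Var j ^ ?Q) * omit a f"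
  proof -
    have "(\<Sum>j\<in>{1..a-1}. Const (cs' j) * Var j ^ ?Q * subst (uu a j (lin cs' a)) f) =
        (\<Sum>j\<in>{1..a-1}. Const (cs' j) * Var j ^ ?Q) * omit a f"
      using H[of cs'] by (simp only: Hc_expl)
    then show ?thesis unfolding lin' by (simp only: cs'_def mult.assoc sum_restrict_coef[OF i(2)])
  qed
  have rv: "subst r v = v" unfolding v_def by (rule subst_lin_fix) (simp add: r_def)
  have rVar: "subst r (Var j) = Var j" if "j < i" for j using that by (simp add: r_def)
  have ro: "subst r (omit a f) = omit i f"
    unfolding omit_eq subst_subst r_def using i by (intro arg_cong[where f = "\<lambda>s. subst s f"] ext) auto
  have rrot: "subst r (subst (uu a j v) f) = subst (uu i j v) f" if j: "j \<in> {1..i-1}" for j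
  proof -
    have "subst r (subst (uu a j v) f) = subst (\<lambda>k. uu i j v (pii a (i - 1) k)) f"
      unfolding subst_subst using j i rv
      by (intro arg_cong[where f = "\<lambda>s. subst s f"] ext) (auto simp: uu_def pii_def r_def)
    also have "\<dots> = subst (uu i j v) f" by (rule rot[OF H]) (use j i in auto)
    finally show ?thesis .
  qed
  have key: "(\<Sum>j\<in>{1..i-1}. Const (cs j) * (Var j ^ ?Q * subst (uu i j v) f)) =
      (\<Sum>j\<in>{1..i-1}. Const (cs j) * Var j ^ ?Q) * omit i f"
  proof -
    have "subst r (\<Sum>j\<in>{1..i-1}. Const (cs j) * (Var j ^ ?Q * subst (uu a j v) f)) =
        (\<Sum>j\<in>{1..i-1}. Const (cs j) * (Var j ^ ?Q * subst (uu i j v) f))"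
      unfolding subst.hom_sum
    proof (intro sum.cong refl)
      fix j assume j: "j \<in> {1..i-1}"
      then have "j < i" by auto
      then show "subst r (Const (cs j) * (Var j ^ ?Q * subst (uu a j v) f)) = Const (cs j) * (Var j ^ ?Q * subst (uu i j v) f)"
        by (simp add: subst.hom_mult subst.hom_power rrot[OF j], simp add: r_def)
    qed
    moreover have "subst r ((\<Sum>j\<in>{1..i-1}. Const (cs j) * Var j ^ ?Q) * omit a f) =
        (\<Sum>j\<in>{1..i-1}. Const (cs j) * Var j ^ ?Q) * omit i f"
      unfolding subst.hom_mult subst.hom_sum ro
      by (intro arg_cong2[where f = "(*)"] sum.cong refl) (auto simp: subst.hom_mult subst.hom_power r_def)
    ultimately show ?thesis using Hs by simp
  qed
  have sgj: "(\<Sum>j\<in>{1..i-1}. Const (cs j) * Var j ^ ?Q * sg i cs (omit j f)) =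
      (\<Sum>j\<in>{1..i-1}. Const (cs j) * (Var j ^ ?Q * subst (uu i j v) f))"
  proof (intro sum.cong refl)
    fix j assume "j \<in> {1..i-1}"
    then have "j < i" by auto
    then show "Const (cs j) * Var j ^ ?Q * sg i cs (omit j f) = Const (cs j) * (Var j ^ ?Q * subst (uu i j v) f)"
      by (simp add: sg_omit_lt v_def mult.assoc)
  qed
  have vQ: "v ^ ?Q = (\<Sum>j\<in>{1..i-1}. Const (cs j) * Var j ^ ?Q)"
    unfolding v_def lin_def by (rule frob_lin)
  show ?thesis unfolding ee_def sg_omit_self sgj[unfolded v_def] key[unfolded v_def] vQ[unfolded v_def] by simp
qed

lemma bwd:
  assumes H: "\<And>cs. Hc cs"
  shows "mooreL (card (UNIV :: 'a set)) a dvd det Nm"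
proof -
  have "i \<le> a \<Longrightarrow> mooreL (card (UNIV :: 'a set)) i dvd det Nm" for i
  proof (induction i)
    case 0 then show ?case by (simp add: mooreL_0)
  next
    case (Suc i)
    then obtain h where h: "det Nm = mooreL (card (UNIV :: 'a set)) i * h" by (auto elim: dvdE)
    have roots: "subst (Var(Suc i := w)) h = 0" if w: "w \<in> Vs (Suc i)" for w
    proof -
      obtain cs where wcs: "w = lin cs (Suc i)" using Vs_lin[OF w] by blast
      have "sg (Suc i) cs (det Nm) = 0" using sigmaN[of "Suc i" cs] ee_zero[OF H, of "Suc i" cs] Suc.prems by simp
      moreover have "sg (Suc i) cs (mooreL (card (UNIV :: 'a set)) i) = mooreL (card (UNIV :: 'a set)) i"
        unfolding sg_def by (rule subst_fix_MM) auto
      ultimately have "mooreL (card (UNIV :: 'a set)) i * sg (Suc i) cs h = 0"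
        using h by (simp add: sg_def subst.hom_mult)
      then have "sg (Suc i) cs h = 0" using mooreL_nz[of i, where 'a = 'a] by simp
      then show ?thesis by (simp add: sg_def wcs)
    qed
    have "PP (Suc i) dvd h" unfolding PP_def
      by (rule roots_prod_dvd[OF finite_Vs]) (auto simp: subst_Vs_fix roots)
    then have "mooreL (card (UNIV :: 'a set)) i * PP (Suc i) dvd det Nm" using h by (simp add: mult_dvd_mono)
    then show ?case using moore_factor[of "Suc i", where 'a = 'a] by simp
  qed
  then show ?thesis by simp
qed

lemma fwd:
  assumes d: "mooreL (card (UNIV :: 'a set)) a dvd det Nm"
  shows "Hc cs"
proof -
  let ?Q = "card (UNIV :: 'a set) ^ b"
  define v where "v = lin cs a"
  have "Var a - v dvd PP a" unfolding PP_def v_def by (rule dvd_prodI[OF finite_Vs lin_in_Vs])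
  also have "PP a dvd (mooreL (card (UNIV :: 'a set)) a :: 'a mpoly)" using moore_factor[OF a1, where 'a = 'a] by (metis dvd_triv_right)
  also note d
  finally have dv: "Var a - v dvd det Nm" .
  have "sg a cs (Var a - v) dvd sg a cs (det Nm)" unfolding sg_def by (rule subst.hom_dvd[OF dv])
  moreover have "sg a cs (Var a - v) = 0"
    by (simp add: sg_def v_def subst.hom_minus subst_Vs_fix[OF lin_in_Vs])
  ultimately have s0: "sg a cs (det Nm) = 0" by simp
  have cof: "cofactor (map_mat (sg a cs) Nm) (a - 1) (a - 1) = mooreL (card (UNIV :: 'a set)) (a - 1)"
  proof -
    have "mat_delete (map_mat (sg a cs) Nm) (a - 1) (a - 1) = MM (a - 1)"
      unfolding mat_delete_def Nm_def by (intro eq_matI) (auto simp: sg_def subst.hom_power)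
    moreover have "(-1 :: 'a mpoly) ^ ((a - 1) + (a - 1)) = 1"
      by (simp flip: mult_2 add: power_mult)
    ultimately show ?thesis by (simp add: cofactor_def mooreL_def')
  qed
  have "ee a cs * mooreL (card (UNIV :: 'a set)) (a - 1) = 0"
    using sigmaN[OF a1 order.refl, of cs] s0 cof by simp
  then have ee0: "ee a cs = 0" using mooreL_nz[of "a - 1", where 'a = 'a] by simp
  have sgj: "(\<Sum>j\<in>{1..a-1}. Const (cs j) * Var j ^ ?Q * sg a cs (omit j f)) =
      (\<Sum>j\<in>{1..a-1}. Const (cs j) * Var j ^ ?Q * subst (uu a j (lin cs a)) f)"
  proof (intro sum.cong refl)
    fix j assume "j \<in> {1..a-1}"
    then have "j < a" by auto
    then show "Const (cs j) * Var j ^ ?Q * sg a cs (omit j f) = Const (cs j) * Var j ^ ?Q * subst (uu a j (lin cs a)) f"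
      by (simp add: sg_omit_lt)
  qed
  have vQ: "lin cs a ^ ?Q = (\<Sum>j\<in>{1..a-1}. Const (cs j) * Var j ^ ?Q)"
    unfolding lin_def by (rule frob_lin)
  show ?thesis using ee0 unfolding Hc_expl ee_def sg_omit_self sgj vQ by simp
qed

end

theorem mainTheorem9:
  fixes f :: "('a::{finite,field}) mpoly" and a b c :: nat
  assumes "1 \<le> a" and "a \<le> c + 1"
    and "mvars f \<subseteq> {1..c}"
  shows "delta_is_poly (card (UNIV :: 'a set)) a b f \<longleftrightarrow>
    (\<forall>cs :: nat \<Rightarrow> 'a.
      let y = (\<Sum>j\<in>{1..a-1}. Const (cs j) * Var j) in
      (\<Sum>i\<in>{1..a-1}. Const (cs i) * Var i ^ ((card (UNIV :: 'a set)) ^ b) *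
          subst (\<lambda>k. if k < i then Var k else if k + 1 = a then y else Var (k + 1)) f)
      = (\<Sum>j\<in>{1..a-1}. Const (cs j) * Var j ^ ((card (UNIV :: 'a set)) ^ b)) * omit a f)"
proof -
  interpret thm9 f a b c using assms by unfold_locales
  have "delta_is_poly (card (UNIV :: 'a set)) a b f \<longleftrightarrow> (\<forall>cs. Hc cs)"
    unfolding delta_is_poly_def deltaN_Nm using fwd bwd by blast
  then show ?thesis unfolding Hc_def .
qed

end
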